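(* Let $p\ge3$ and $h=\lfloor p/2\rfloor$. Let $m,s,n,j$ be integers and $B$ a real number. If $0\le m<n$, $0\le s<n$, $h+2<B$, and $l_\Gamma(t^{-m}a^jt^s)>Bn$, then $|j|>p^{(\frac{1}{h+2}B-2)n}$.
   Context: $G=BS(1,p)=\langle a,t\mid tat^{-1}=a^p\rangle$ with generating set $\{a^{\pm1},t^{\pm1}\}$; for a word $v$, $l_\Gamma(v)$ denotes the word length (length of a geodesic representative in the Cayley graph) of the element of $G$ represented by $v$. *)

theory Defs
  imports Complex_Main
begin

text \<open>Generators a, a^-1, t, t^-1 of BS(1,p) = < a, t | t a t^-1 = a^p >.\<close>
datatype gen = A | Ai | T | Ti

fun ginv :: "gen \<Rightarrow> gen" where
  "ginv A = Ai" | "ginv Ai = A" | "ginv T = Ti" | "ginv Ti = T"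

inductive bs_eq :: "nat \<Rightarrow> gen list \<Rightarrow> gen list \<Rightarrow> bool" for p where
  bs_refl: "bs_eq p w w"
| bs_sym: "bs_eq p u v \<Longrightarrow> bs_eq p v u"
| bs_trans: "bs_eq p u v \<Longrightarrow> bs_eq p v w \<Longrightarrow> bs_eq p u w"
| bs_free: "bs_eq p (u @ [x, ginv x] @ v) (u @ v)"
| bs_rel: "bs_eq p (u @ [T, A, Ti] @ v) (u @ replicate p A @ v)"

text \<open>Word length l_Gamma of the element represented by w (generating set {a^\<pm>1, t^\<pm>1}).\<close>
definition wlen :: "nat \<Rightarrow> gen list \<Rightarrow> nat" where
  "wlen p w = (LEAST n. \<exists>u. length u = n \<and> bs_eq p u w)"

definition apow :: "int \<Rightarrow> gen list" where
  "apow j = (if 0 \<le> j then replicate (nat j) A else replicate (nat (- j)) Ai)"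

end

theory Submission
  imports Defs
begin

lemma bs_cong: "bs_eq p u v \<Longrightarrow> bs_eq p (x@u@y) (x@v@y)"
proof (induction rule: bs_eq.induct)
  case (bs_refl w) then show ?case by (rule bs_eq.bs_refl)
next
  case (bs_sym u v) then show ?case by (blast intro: bs_eq.bs_sym)
next
  case (bs_trans u v w) then show ?case by (blast intro: bs_eq.bs_trans)
next
  case (bs_free u a v) then show ?case using bs_eq.bs_free[of p "x@u" a "v@y"] by simp
next
  case (bs_rel u v) then show ?case using bs_eq.bs_rel[of p "x@u" "v@y"] by simp
qed

lemma bs_app: "bs_eq p u u' \<Longrightarrow> bs_eq p v v' \<Longrightarrow> bs_eq p (u@v) (u'@v')"
  using bs_cong[of p u u' "[]" v] bs_cong[of p v v' u' "[]"] by (auto intro: bs_trans)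

lemma bs_cancel: "bs_eq p (replicate n x @ replicate k (ginv x)) (replicate (n-k) x @ replicate (k-n) (ginv x))"
proof (induction n arbitrary: k)
  case 0 then show ?case by (simp add: bs_refl)
next
  case (Suc n)
  show ?case
  proof (cases k)
    case 0 then show ?thesis by (simp add: bs_refl)
  next
    case (Suc k')
    have e: "replicate (Suc n) x @ replicate k (ginv x) = replicate n x @ [x, ginv x] @ replicate k' (ginv x)"
      using Suc by (simp add: replicate_append_same[symmetric])
    have "bs_eq p (replicate n x @ [x, ginv x] @ replicate k' (ginv x)) (replicate n x @ replicate k' (ginv x))"
      by (rule bs_free)
    then show ?thesis using e Suc.IH[of k'] Suc by (auto intro: bs_trans)
  qed
qed

lemma bs_conj:
  assumes r: "bs_eq p [T,x,Ti] (replicate p x)"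
  shows "bs_eq p (T # replicate q x @ [Ti]) (replicate (p*q) x)"
proof (induction q)
  case 0 then show ?case using bs_free[of p "[]" T "[]"] by simp
next
  case (Suc q)
  have 1: "bs_eq p (T # replicate (Suc q) x @ [Ti]) ([T,x,Ti] @ (T # replicate q x @ [Ti]))"
    using bs_free[of p "[T,x]" Ti "replicate q x @ [Ti]"] by (simp add: bs_sym)
  have 2: "bs_eq p ([T,x,Ti] @ (T # replicate q x @ [Ti])) (replicate p x @ replicate (p*q) x)"
    using r Suc.IH by (rule bs_app)
  have 3: "replicate p x @ replicate (p*q) x = replicate (p * Suc q) x"
    by (simp add: replicate_add[symmetric])
  show ?case using 1 2 3 by (metis bs_trans)
qed

lemma bs_TAiTi: "bs_eq p [T,Ai,Ti] (replicate p Ai)"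
proof -
  have c: "bs_eq p (replicate p A @ replicate p Ai) []"
    using bs_cancel[where p=p and n=p and k=p and x=A] by simp
  have 1: "bs_eq p [T,Ai,Ti] ([T,Ai,Ti] @ replicate p A @ replicate p Ai)"
    using bs_app[OF bs_refl[of p "[T,Ai,Ti]"] c] by (simp add: bs_sym)
  have 2: "bs_eq p ([T,Ai,Ti] @ replicate p A @ replicate p Ai) ([T,Ai,Ti] @ [T,A,Ti] @ replicate p Ai)"
    using bs_rel[of p "[T,Ai,Ti]" "replicate p Ai"] by (rule bs_sym)
  have 3: "bs_eq p ([T,Ai,Ti] @ [T,A,Ti] @ replicate p Ai) ([T,Ai] @ [A,Ti] @ replicate p Ai)"
    using bs_free[of p "[T,Ai]" Ti "[A,Ti] @ replicate p Ai"] by simp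
  have 4: "bs_eq p ([T,Ai] @ [A,Ti] @ replicate p Ai) ([T] @ [Ti] @ replicate p Ai)"
    using bs_free[of p "[T]" Ai "[Ti] @ replicate p Ai"] by simp
  have 5: "bs_eq p ([T] @ [Ti] @ replicate p Ai) (replicate p Ai)"
    using bs_free[of p "[]" T "replicate p Ai"] by simp
  show ?thesis using 1 2 3 4 5 by (metis bs_trans)
qed

lemma len_apow: "length (apow j) = nat \<bar>j\<bar>"
  by (simp add: apow_def)

lemma apow_add: "bs_eq p (apow a @ apow b) (apow (a+b))"
proof -
  consider "a \<ge> 0" "b \<ge> 0" | "a < 0" "b < 0" | "a \<ge> 0" "b < 0" | "a < 0" "b \<ge> 0" by linarith
  then show ?thesis
  proof cases
    case 1
    then have "apow a @ apow b = apow (a+b)"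
      by (simp add: apow_def replicate_add[symmetric] nat_add_distrib)
    then show ?thesis by (simp add: bs_refl)
  next
    case 2
    then have "apow a @ apow b = apow (a+b)"
      by (simp add: apow_def replicate_add[symmetric] nat_add_distrib)
    then show ?thesis by (simp add: bs_refl)
  next
    case 3
    have c: "bs_eq p (replicate (nat a) A @ replicate (nat (-b)) (ginv A)) (replicate (nat a - nat (-b)) A @ replicate (nat (-b) - nat a) (ginv A))"
      by (rule bs_cancel)
    have "replicate (nat a - nat (-b)) A @ replicate (nat (-b) - nat a) (ginv A) = apow (a+b)"
      using 3 by (cases "a + b \<ge> 0") (auto simp: apow_def nat_diff_distrib)
    moreover have "apow a @ apow b = replicate (nat a) A @ replicate (nat (-b)) (ginv A)"
      using 3 by (simp add: apow_def)
    ultimately show ?thesis using c by simp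
  next
    case 4
    have c: "bs_eq p (replicate (nat (-a)) Ai @ replicate (nat b) (ginv Ai)) (replicate (nat (-a) - nat b) Ai @ replicate (nat b - nat (-a)) (ginv Ai))"
      by (rule bs_cancel)
    have "replicate (nat (-a) - nat b) Ai @ replicate (nat b - nat (-a)) (ginv Ai) = apow (a+b)"
      using 4 by (cases "a + b \<ge> 0") (auto simp: apow_def nat_diff_distrib)
    moreover have "apow a @ apow b = replicate (nat (-a)) Ai @ replicate (nat b) (ginv Ai)"
      using 4 by (simp add: apow_def)
    ultimately show ?thesis using c by simp
  qed
qed

lemma apow_mul:
  assumes "p > 0"
  shows "bs_eq p (T # apow q @ [Ti]) (apow (int p * q))"
proof (cases "q \<ge> 0")
  case True
  have "bs_eq p [T,A,Ti] (replicate p A)" using bs_rel[of p "[]" "[]"] by simp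
  from bs_conj[OF this, of "nat q"] show ?thesis using True
    by (simp add: apow_def nat_mult_distrib)
next
  case False
  have n: "\<not> 0 \<le> int p * q" using False assms by (simp add: not_le mult_pos_neg)
  have e: "nat (- (int p * q)) = p * nat (-q)" proof -
    have "- (int p * q) = int p * (-q)" by simp
    then show ?thesis by (simp only: nat_mult_distrib[OF of_nat_0_le_iff] nat_int)
  qed
  from bs_conj[OF bs_TAiTi, of p "nat (-q)"] show ?thesis using False n e
    by (simp add: apow_def)
qed

lemma rep_exists:
  assumes p3: "p \<ge> 3"
  shows "\<bar>j\<bar> \<le> int p ^ k \<Longrightarrow> \<exists>u. bs_eq p u (apow j) \<and> length u \<le> (p div 2 + 2) * k + p div 2"
proof (induction k arbitrary: j)
  case 0
  have "p div 2 \<ge> 1" using p3 by simp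
  then have "nat \<bar>j\<bar> \<le> p div 2" using 0 by simp
  then show ?case by (intro exI[of _ "apow j"]) (simp add: len_apow bs_refl)
next
  case (Suc k)
  define h where "h = int (p div 2)"
  define P where "P = int p"
  have hP: "P \<le> 2*h + 1" "P \<ge> 3" "h \<ge> 1" "h < P" using p3 unfolding h_def P_def by linarith+
  show ?case
  proof (cases "\<bar>j\<bar> \<le> h")
    case True
    then have "nat \<bar>j\<bar> \<le> p div 2" unfolding h_def by simp
    then show ?thesis by (intro exI[of _ "apow j"]) (simp add: len_apow bs_refl)
  next
    case False
    define q where "q = (j + h) div P"
    define d where "d = (j + h) mod P - h"
    have jq: "j = P*q + d" unfolding q_def d_def using div_mult_mod_eq[of "j+h" P]
      by (simp add: algebra_simps)
    have m: "0 \<le> (j + h) mod P" "(j + h) mod P < P" using hP by simp_all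
    have dh: "\<bar>d\<bar> \<le> h" using m hP unfolding d_def by linarith
    have jb: "\<bar>j\<bar> \<le> P * P^k" using Suc.prems unfolding P_def by simp
    have "P * \<bar>q\<bar> = \<bar>j - d\<bar>" using jq hP by (simp add: abs_mult)
    also have "\<dots> \<le> \<bar>j\<bar> + h" using dh by linarith
    also have "\<dots> < P * (P^k + 1)" using jb hP by (simp add: algebra_simps)
    finally have "\<bar>q\<bar> < P^k + 1" using hP by (simp add: mult_less_cancel_left)
    then have "\<bar>q\<bar> \<le> int p ^ k" unfolding P_def by simp
    from Suc.IH[OF this] obtain u where u: "bs_eq p u (apow q)"
      and lu: "length u \<le> (p div 2 + 2) * k + p div 2" by blast
    have e1: "bs_eq p (T # u @ [Ti] @ apow d) ((T # apow q @ [Ti]) @ apow d)"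
      using bs_cong[OF u, of "[T]" "[Ti] @ apow d"] by simp
    have e2: "bs_eq p ((T # apow q @ [Ti]) @ apow d) (apow (int p * q) @ apow d)"
      using apow_mul[of p q] p3 by (intro bs_app bs_refl) simp_all
    have e3: "bs_eq p (apow (int p * q) @ apow d) (apow j)"
      using apow_add[of p "int p * q" d] jq unfolding P_def by simp
    have "length (T # u @ [Ti] @ apow d) = 2 + length u + nat \<bar>d\<bar>"
      by (simp add: len_apow)
    also have "\<dots> \<le> (p div 2 + 2) * Suc k + p div 2"
      using lu dh unfolding h_def by simp
    finally show ?thesis using e1 e2 e3 by (meson bs_trans)
  qed
qed

lemma wlen_le: "bs_eq p u w \<Longrightarrow> wlen p w \<le> length u"
  unfolding wlen_def by (rule Least_le) blast

theorem lemma6p3: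
  fixes p :: nat and m s n j :: int and B :: real
  assumes "p \<ge> 3"
    and "0 \<le> m" and "m < n" and "0 \<le> s" and "s < n"
    and "real (p div 2) + 2 < B"
    and "real (wlen p (replicate (nat m) Ti @ apow j @ replicate (nat s) T)) > B * real_of_int n"
  shows "real_of_int \<bar>j\<bar> > real p powr ((B / (real (p div 2) + 2) - 2) * real_of_int n)"
proof (rule ccontr)
  assume na: "\<not> ?thesis"
  define H where "H = real (p div 2)"
  define X where "X = B / (H + 2) - 2"
  define k where "k = nat \<lceil>X * real_of_int n\<rceil>"
  have Hpos: "H \<ge> 0" unfolding H_def by simp
  have BX: "B = (H + 2) * (X + 2)" unfolding X_def using Hpos by (simp add: field_simps)
  have j1: "real_of_int \<bar>j\<bar> \<le> real p powr (X * real_of_int n)"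
    using na unfolding X_def H_def by simp
  have "real p powr (X * real_of_int n) \<le> real p powr (real k)"
    using assms(1) unfolding k_def by (intro powr_mono) (linarith, simp)
  also have "\<dots> = real p ^ k" using assms(1) by (simp add: powr_realpow)
  finally have "real_of_int \<bar>j\<bar> \<le> real_of_int (int p ^ k)" using j1 by simp
  then have jk: "\<bar>j\<bar> \<le> int p ^ k" by (simp only: of_int_le_iff)
  from rep_exists[OF assms(1) jk] obtain u where u: "bs_eq p u (apow j)"
    and lu: "length u \<le> (p div 2 + 2) * k + p div 2" by blast
  have "bs_eq p (replicate (nat m) Ti @ u @ replicate (nat s) T) (replicate (nat m) Ti @ apow j @ replicate (nat s) T)"
    by (rule bs_cong[OF u])
  then have "wlen p (replicate (nat m) Ti @ apow j @ replicate (nat s) T) \<le> nat m + length u + nat s"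
    using wlen_le by fastforce
  also have "\<dots> \<le> nat m + ((p div 2 + 2) * k + p div 2) + nat s" using lu by simp
  finally have w0: "real (wlen p (replicate (nat m) Ti @ apow j @ replicate (nat s) T))
      \<le> real (nat m + ((p div 2 + 2) * k + p div 2) + nat s)" by (rule of_nat_mono)
  have "real (nat m + ((p div 2 + 2) * k + p div 2) + nat s) = real_of_int m + ((H + 2) * real k + H) + real_of_int s"
    unfolding H_def using assms(2,4) by (simp add: algebra_simps)
  with w0 have w: "real (wlen p (replicate (nat m) Ti @ apow j @ replicate (nat s) T))
      \<le> real_of_int m + ((H + 2) * real k + H) + real_of_int s" by simp
  have n1: "real_of_int n \<ge> 1" "real_of_int m \<le> real_of_int n - 1" "real_of_int s \<le> real_of_int n - 1"
    using assms(2,3,4,5) by simp_all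
  have "real_of_int m + ((H + 2) * real k + H) + real_of_int s \<le> B * real_of_int n"
  proof (cases "k = 0")
    case True
    have "B * real_of_int n \<ge> (H + 2) * real_of_int n"
      using assms(6) n1 unfolding H_def by (intro mult_right_mono) simp_all
    moreover have "H * real_of_int n \<ge> H" using Hpos n1 by (simp add: mult_left_mono[of 1 _ H, simplified])
    ultimately show ?thesis using True n1 by (simp add: algebra_simps)
  next
    case False
    then have c0: "\<lceil>X * real_of_int n\<rceil> > 0" unfolding k_def by simp
    then have "real k = real_of_int \<lceil>X * real_of_int n\<rceil>" unfolding k_def by simp
    moreover have "real_of_int \<lceil>X * real_of_int n\<rceil> - 1 < X * real_of_int n"
      using ceiling_correct[of "X * real_of_int n"] by simp
    ultimately have "real k < X * real_of_int n + 1" by simp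
    then have kb: "(H + 2) * real k \<le> (H + 2) * (X * real_of_int n + 1)"
      using Hpos by (intro mult_left_mono) simp_all
    have "H * real_of_int n \<ge> H" using Hpos n1 by (simp add: mult_left_mono[of 1 _ H, simplified])
    then show ?thesis using kb n1 BX by (simp add: algebra_simps)
  qed
  then show False using w assms(7) by linarith
qed

end
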